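(* Let $\Phi:[0,\infty)\to(0,1]$ be a decreasing bijection and let $\phi=-\log\Phi$. Then \[ \int_0^1\frac{1}{u(1\vee\log\Phi^{-1}(u))}\,\mathrm{d}u=\infty \quad\text{if and only if}\quad \sum_{n=1}^\infty\frac{1}{1\vee\log\phi^{-1}(n)}=\infty. \]
   Context: $\Phi^{-1}$ and $\phi^{-1}$ denote the inverse functions of $\Phi$ and $\phi$. *)

theory Defs
  imports "HOL-Analysis.Analysis"
begin

end

theory Submission
  imports Defs "HOL-Analysis.Analysis"
begin

lemma inv_has_integral_Ioc:
  fixes a b :: real assumes "0 < a" "a \<le> b"
  shows "((\<lambda>u. 1/u) has_integral (ln b - ln a)) {a<..b}"
proof -
  have "((\<lambda>u. 1/u) has_integral (ln b - ln a)) {a..b}"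
  proof (rule fundamental_theorem_of_calculus[OF assms(2)])
    fix x assume "x \<in> {a..b}"
    then have "x > 0" using assms by auto
    then show "(ln has_vector_derivative 1/x) (at x within {a..b})"
      by (auto intro!: derivative_eq_intros simp: has_real_derivative_iff_has_vector_derivative[symmetric])
  qed
  moreover have "negligible {x \<in> {a..b} - {a<..b}. 1/x \<noteq> (0::real)}"
    by (rule negligible_subset[of "{a}"]) auto
  moreover have "negligible {x \<in> {a<..b} - {a..b}. 1/x \<noteq> (0::real)}"
    by (rule negligible_subset[of "{}"]) auto
  ultimately show ?thesis using has_integral_spike_set_eq by blast
qed

lemma inv_nn_integral_Ioc:
  fixes a b :: real assumes "0 < a" "a \<le> b"
  shows "(\<integral>\<^sup>+ u. ennreal (1/u) * indicator {a<..b} u \<partial>lborel) = ennreal (ln b - ln a)"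
  by (rule nn_integral_has_integral_lebesgue'[OF _ inv_has_integral_Ioc[OF assms]]) (use assms in auto)


theorem lemma2p2:
  fixes Phi :: "real \<Rightarrow> real"
  assumes bij: "bij_betw Phi {0..} {0<..1}"
    and decr: "\<And>x y. 0 \<le> x \<Longrightarrow> x \<le> y \<Longrightarrow> Phi y \<le> Phi x"
  shows "(\<integral>\<^sup>+ u \<in> {0<..1}. ennreal (1 / (u * max 1 (ln (the_inv_into {0..} Phi u)))) \<partial>lborel) = \<infinity>
     \<longleftrightarrow> (\<Sum>n. ennreal (1 / max 1 (ln (the_inv_into {0..} (\<lambda>x. - ln (Phi x)) (real (Suc n)))))) = \<infinity>"
proof -
  define Psi where "Psi = the_inv_into {0..} Phi"
  define H where "H = (\<lambda>x::real. max 1 (ln x))"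
  define a where "a = (\<lambda>k::nat. 1 / H (Psi (exp (- real k))))"
  define I where "I = (\<lambda>k::nat. {exp (- real (Suc k))<..exp (- real k)})"
  have inj: "inj_on Phi {0..}" and img: "Phi ` {0..} = {0<..1}"
    using bij by (auto simp: bij_betw_def)
  have Psi: "Psi u \<ge> 0" "Phi (Psi u) = u" if "u \<in> {0<..1}" for u
    using that the_inv_into_into[OF inj, of u] f_the_inv_into_f[OF inj, of u] img
    unfolding Psi_def by auto
  have Psi_mono: "Psi v \<le> Psi u" if "0 < u" "u \<le> v" "v \<le> 1" for u v
  proof (rule ccontr)
    assume "\<not> Psi v \<le> Psi u"
    then have "Phi (Psi v) \<le> Phi (Psi u)" using decr[of "Psi u" "Psi v"] Psi[of u] that by auto
    then have "v \<le> u" using Psi[of u] Psi[of v] that by auto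
    then have "u = v" using that by auto
    then show False using \<open>\<not> Psi v \<le> Psi u\<close> by auto
  qed
  have H_mono: "H x \<le> H y" if "0 \<le> x" "x \<le> y" for x y
  proof (cases "x = 0")
    case True
    then show ?thesis by (simp add: H_def)
  next
    case False
    then have "ln x \<le> ln y" using that by simp
    then show ?thesis by (auto simp: H_def)
  qed
  have H1: "H x \<ge> 1" for x by (simp add: H_def)
  have a_nn: "a k \<ge> 0" for k using H1[of "Psi (exp (- real k))"] by (simp add: a_def)
  have a_le1: "a k \<le> 1" for k using H1[of "Psi (exp (- real k))"] by (simp add: a_def)
  have phi_inv: "the_inv_into {0..} (\<lambda>x. - ln (Phi x)) t = Psi (exp (- t))" if "t \<ge> 0" for t
  proof (rule the_inv_into_f_eq)
    show "inj_on (\<lambda>x. - ln (Phi x)) {0..}"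
    proof (rule inj_onI)
      fix x y assume "x \<in> {0..}" "y \<in> {0..}" "- ln (Phi x) = - ln (Phi y)"
      moreover have "Phi x > 0" "Phi y > 0" using img \<open>x \<in> {0..}\<close> \<open>y \<in> {0..}\<close> by auto
      ultimately show "x = y" using inj by (auto dest: inj_onD)
    qed
    have "exp (- t) \<in> {0<..1}" using that by auto
    then show "- ln (Phi (Psi (exp (- t)))) = t" "Psi (exp (- t)) \<in> {0..}" using Psi by auto
  qed
  have disj: "disjoint_family I" unfolding disjoint_family_on_def
  proof (intro ballI impI)
    fix m n :: nat assume "m \<noteq> n"
    have *: "I m \<inter> I n = {}" if "m < n" for m n
    proof -
      have "exp (- real n) \<le> exp (- real (Suc m))" using that by simp
      then show ?thesis by (auto simp: I_def)
    qed
    show "I m \<inter> I n = {}"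
    proof (cases "m < n")
      case True then show ?thesis using * by blast
    next
      case False then have "n < m" using \<open>m \<noteq> n\<close> by auto
      then show ?thesis using *[of n m] by blast
    qed
  qed
  have cover: "\<exists>k. u \<in> I k" if "u \<in> {0<..1}" for u
  proof -
    have u: "0 < u" "u \<le> 1" using that by auto
    have "- ln u \<ge> 0" using u by simp
    define k where "k = nat \<lfloor>- ln u\<rfloor>"
    have k1: "real k \<le> - ln u" using \<open>- ln u \<ge> 0\<close> unfolding k_def by linarith
    have k2: "- ln u < real k + 1" using \<open>- ln u \<ge> 0\<close> unfolding k_def by linarith
    have "exp (- real (Suc k)) < exp (ln u)" using k2 by simp
    moreover have "exp (ln u) \<le> exp (- real k)" using k1 by simp
    ultimately have "u \<in> I k" using u by (simp add: I_def)
    then show ?thesis by blast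
  qed
  have Isub: "I k \<subseteq> {0<..1}" for k
  proof
    fix x assume "x \<in> I k"
    then have "exp (- real (Suc k)) < x" "x \<le> exp (- real k)" by (auto simp: I_def)
    moreover have "exp (- real k) \<le> 1" "0 < exp (- real (Suc k))" by auto
    ultimately show "x \<in> {0<..1}" unfolding greaterThanAtMost_iff by linarith
  qed
  define F where "F = (\<lambda>u. ennreal (1 / (u * H (Psi u))) * indicator {0<..1} u)"
  have up: "1 / (u * H (Psi u)) \<le> a k * (1 / u)" if "u \<in> I k" for u k
  proof -
    have u: "0 < u" "u \<le> exp (- real k)" "exp (- real k) \<le> 1" using that Isub[of k] by (auto simp: I_def)
    have "Psi (exp (- real k)) \<le> Psi u" using Psi_mono u by auto
    moreover have "0 \<le> Psi (exp (- real k))" using Psi u by auto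
    ultimately have "H (Psi (exp (- real k))) \<le> H (Psi u)" using H_mono by auto
    then have "u * H (Psi (exp (- real k))) \<le> u * H (Psi u)" using u by simp
    moreover have "0 < u * H (Psi (exp (- real k)))" using u H1[of "Psi (exp (- real k))"] by simp
    ultimately have "1 / (u * H (Psi u)) \<le> 1 / (u * H (Psi (exp (- real k))))"
      by (simp add: frac_le)
    then show ?thesis by (simp add: a_def mult.commute)
  qed
  have lo: "a (Suc k) * (1 / u) \<le> 1 / (u * H (Psi u))" if "u \<in> I k" for u k
  proof -
    have u: "exp (- real (Suc k)) < u" "u \<le> 1" "0 < exp (- real (Suc k))" "0 < u" using that Isub[of k] by (auto simp: I_def)
    have "Psi u \<le> Psi (exp (- real (Suc k)))" using Psi_mono u by auto
    moreover have "0 \<le> Psi u" using Psi(1)[of u] u by auto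
    ultimately have "H (Psi u) \<le> H (Psi (exp (- real (Suc k))))" using H_mono by auto
    then have "u * H (Psi u) \<le> u * H (Psi (exp (- real (Suc k))))" using u by simp
    moreover have "0 < u * H (Psi u)" using u H1[of "Psi u"] by simp
    ultimately have "1 / (u * H (Psi (exp (- real (Suc k))))) \<le> 1 / (u * H (Psi u))"
      by (simp add: frac_le)
    then show ?thesis by (simp add: a_def mult.commute)
  qed
  have sum_at: "(\<Sum>n. ennreal (c n) * (ennreal (1/u) * indicator (I n) u)) = ennreal (c k * (1/u))"
    if "u \<in> I k" "\<And>n. c n \<ge> 0" for u k c
  proof -
    have "u > 0" using that(1) Isub[of k] by auto
    have "(\<Sum>n. ennreal (c n) * (ennreal (1/u) * indicator (I n) u)) =
          (\<Sum>n. (ennreal (c n) * ennreal (1/u)) * indicator (I n) u)"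
      by (simp add: mult.assoc)
    also have "\<dots> = ennreal (c k) * ennreal (1/u)"
      by (rule suminf_cmult_indicator[OF disj that(1)])
    also have "\<dots> = ennreal (c k * (1/u))" using that(2)[of k] \<open>u > 0\<close> by (subst ennreal_mult) auto
    finally show ?thesis .
  qed
  have sum_out: "(\<Sum>n. ennreal (c n) * (ennreal (1/u) * indicator (I n) u)) = 0"
    if "u \<notin> {0<..1}" for u c
  proof -
    have "u \<notin> I n" for n using that Isub[of n] by blast
    then show ?thesis by simp
  qed
  have int_sum: "(\<integral>\<^sup>+ u. (\<Sum>n. ennreal (c n) * (ennreal (1/u) * indicator (I n) u)) \<partial>lborel)
     = (\<Sum>n. ennreal (c n))" for c
  proof -
    have "(\<integral>\<^sup>+ u. (\<Sum>n. ennreal (c n) * (ennreal (1/u) * indicator (I n) u)) \<partial>lborel)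
       = (\<Sum>n. \<integral>\<^sup>+ u. ennreal (c n) * (ennreal (1/u) * indicator (I n) u) \<partial>lborel)"
      unfolding I_def by (rule nn_integral_suminf) measurable
    also have "\<dots> = (\<Sum>n. ennreal (c n) * \<integral>\<^sup>+ u. (ennreal (1/u) * indicator (I n) u) \<partial>lborel)"
    proof -
      have "(\<lambda>u. ennreal (1/u) * indicator (I n) u) \<in> borel_measurable lborel" for n
        unfolding I_def by measurable
      then show ?thesis by (simp add: nn_integral_cmult)
    qed
    also have "\<dots> = (\<Sum>n. ennreal (c n))"
    proof -
      have "(\<integral>\<^sup>+ u. (ennreal (1/u) * indicator (I n) u) \<partial>lborel) = 1" for n
        unfolding I_def by (subst inv_nn_integral_Ioc) auto
      then show ?thesis by simp
    qed
    finally show ?thesis .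
  qed
  have lower: "(\<Sum>n. ennreal (a (Suc n))) \<le> integral\<^sup>N lborel F"
  proof -
    have "(\<Sum>n. ennreal (a (Suc n))) = (\<integral>\<^sup>+ u. (\<Sum>n. ennreal (a (Suc n)) * (ennreal (1/u) * indicator (I n) u)) \<partial>lborel)"
      by (rule int_sum[symmetric])
    also have "\<dots> \<le> integral\<^sup>N lborel F"
    proof (rule nn_integral_mono)
      fix u
      show "(\<Sum>n. ennreal (a (Suc n)) * (ennreal (1/u) * indicator (I n) u)) \<le> F u"
      proof (cases "u \<in> {0<..1}")
        case True
        then obtain k where k: "u \<in> I k" using cover by blast
        show ?thesis using True lo[OF k] a_nn
          by (subst sum_at[OF k]) (auto simp: F_def intro!: ennreal_leI)
      next
        case False
        then show ?thesis by (subst sum_out) auto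
      qed
    qed
    finally show ?thesis .
  qed
  have upper: "integral\<^sup>N lborel F \<le> (\<Sum>n. ennreal (a n))"
  proof -
    have "integral\<^sup>N lborel F \<le> (\<integral>\<^sup>+ u. (\<Sum>n. ennreal (a n) * (ennreal (1/u) * indicator (I n) u)) \<partial>lborel)"
    proof (rule nn_integral_mono)
      fix u
      show "F u \<le> (\<Sum>n. ennreal (a n) * (ennreal (1/u) * indicator (I n) u))"
      proof (cases "u \<in> {0<..1}")
        case True
        then obtain k where k: "u \<in> I k" using cover by blast
        show ?thesis using True up[OF k] a_nn
          by (subst sum_at[OF k]) (auto simp: F_def intro!: ennreal_leI)
      next
        case False
        then show ?thesis by (simp add: F_def)
      qed
    qed
    also have "\<dots> = (\<Sum>n. ennreal (a n))" by (rule int_sum)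
    finally show ?thesis .
  qed
  have split: "(\<Sum>n. ennreal (a n)) = (\<Sum>n. ennreal (a (Suc n))) + ennreal (a 0)"
    using suminf_offset[of "\<lambda>n. ennreal (a n)" 1] by (simp add: summableI)
  have lhs: "(\<integral>\<^sup>+ u \<in> {0<..1}. ennreal (1 / (u * max 1 (ln (the_inv_into {0..} Phi u)))) \<partial>lborel) = integral\<^sup>N lborel F"
    by (simp add: F_def H_def Psi_def)
  have rhs: "(\<Sum>n. ennreal (1 / max 1 (ln (the_inv_into {0..} (\<lambda>x. - ln (Phi x)) (real (Suc n)))))) = (\<Sum>n. ennreal (a (Suc n)))"
  proof -
    have "the_inv_into {0..} (\<lambda>x. - ln (Phi x)) (real (Suc n)) = Psi (exp (- real (Suc n)))" for n
      by (rule phi_inv) simp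
    then show ?thesis by (simp add: a_def H_def)
  qed
  show ?thesis unfolding lhs rhs
  proof
    assume "integral\<^sup>N lborel F = \<infinity>"
    then have "(\<Sum>n. ennreal (a (Suc n))) + ennreal (a 0) = \<infinity>" using upper split by (simp add: top_unique)
    then show "(\<Sum>n. ennreal (a (Suc n))) = \<infinity>" by simp
  next
    assume "(\<Sum>n. ennreal (a (Suc n))) = \<infinity>"
    then show "integral\<^sup>N lborel F = \<infinity>" using lower by (simp add: top_unique)
  qed
qed
end
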